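(* Let $X$ be a compact subset of $K$, or more generally any compact Hausdorff totally disconnected topological space, and let $\{f_n\}_{n\ge0}$ be an orthonormal basis of $C(X,K)$. Then for every positive integer $m$: (1) $\{f_n^{q^m}\}_{n\ge0}$ is an orthonormal basis of $C(X,K)$; (2) $\{f_n^{1/q^m}\}_{n\ge0}$ is an orthonormal basis of $C(X,K_m)$.
   Context: Let $q$ be a prime power, $K=\mathbf{F}_q((T))$ with $T$-adic absolute value $|x|=q^{-v(x)}$. For an integer $m\ge1$, $K_m=K(T^{1/q^m})=\mathbf{F}_q((T^{1/q^m}))$ with the extended absolute value; every element of $K$ has a unique $q^m$-th root in $K_m$, and $f^{1/q^m}$ denotes the pointwise $q^m$-th root $x\mapsto f(x)^{1/q^m}$. For a field $L\in\{K,K_m\}$, $C(X,L)$ is the $L$-Banach space of continuous functions $X\to L$ with sup-norm; a sequence $(g_n)$ in it is an orthonormal basis if every $g$ can be written uniquely as $g=\sum a_ng_n$ with $a_n\in L$, $a_n\to0$, and then $\|g\|=\max|a_n|$. *)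

theory Defs
  imports "HOL-Analysis.Analysis" "HOL-Computational_Algebra.Formal_Laurent_Series"
begin

text \<open>The finite field F_q is a type 'a of class {field, finite}; q = CARD('a).
  K = F_q((T)) is 'a fls.  K_m = F_q((U)) with U = T^(1/q^m) is also modelled by
  'a fls (in the variable U); K embeds into K_m via T |-> U^(q^m).\<close>

definition totally_disconnected :: "'x::topological_space set \<Rightarrow> bool" where
  "totally_disconnected S \<longleftrightarrow> (\<forall>C. C \<subseteq> S \<longrightarrow> connected C \<longrightarrow> (\<exists>a. C \<subseteq> {a}))"

definition absK :: "'a::{field,finite} fls \<Rightarrow> real" where
  "absK x = (if x = 0 then 0 else real CARD('a) powr (- real_of_int (fls_subdegree x)))"

definition absKm :: "nat \<Rightarrow> 'a::{field,finite} fls \<Rightarrow> real" where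
  "absKm m x = (if x = 0 then 0 else
     real CARD('a) powr (- real_of_int (fls_subdegree x) / real (CARD('a) ^ m)))"

definition embKm :: "nat \<Rightarrow> 'a::{field,finite} fls \<Rightarrow> 'a fls" where
  "embKm m x = fls_compose_power x (CARD('a) ^ m)"

definition qroot :: "nat \<Rightarrow> 'a::{field,finite} fls \<Rightarrow> 'a fls" where
  "qroot m y = (THE z. z ^ (CARD('a) ^ m) = embKm m y)"

definition supnorm :: "('b \<Rightarrow> real) \<Rightarrow> 'x set \<Rightarrow> ('x \<Rightarrow> 'b) \<Rightarrow> real" where
  "supnorm av S f = Sup (insert 0 ((\<lambda>x. av (f x)) ` S))"

definition orthonormal_basis ::
  "('b::{field,metric_space} \<Rightarrow> real) \<Rightarrow> 'x::topological_space set \<Rightarrow> (nat \<Rightarrow> 'x \<Rightarrow> 'b) \<Rightarrow> bool" where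
  "orthonormal_basis av S g \<longleftrightarrow>
     (\<forall>n. continuous_on S (g n)) \<and>
     (\<forall>h. continuous_on S h \<longrightarrow>
        (\<exists>!a. (\<lambda>n. av (a n)) \<longlonglongrightarrow> 0 \<and>
              (\<lambda>N. supnorm av S (\<lambda>x. h x - (\<Sum>n<N. a n * g n x))) \<longlonglongrightarrow> 0) \<and>
        (\<forall>a. (\<lambda>n. av (a n)) \<longlonglongrightarrow> 0 \<and>
              (\<lambda>N. supnorm av S (\<lambda>x. h x - (\<Sum>n<N. a n * g n x))) \<longlonglongrightarrow> 0 \<longrightarrow>
              supnorm av S h = (SUP n. av (a n))))"

end

theory Submission
  imports Defs
begin

unbundle fps_syntax


lemma finfield_pow_card:
  fixes x :: "'a::{field,finite}"
  shows "x ^ CARD('a) = x"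
proof (cases "x = 0")
  case False
  have "x * (\<Prod>y\<in>UNIV-{0}. x * y) = x * x ^ (card (UNIV :: 'a set) - 1) * \<Prod>(UNIV-{0})"
    by (simp add: prod.distrib mult_ac)
  also have "x * x ^ (card (UNIV :: 'a set) - 1) = x ^ Suc (card (UNIV :: 'a set) - 1)"
    by (subst power_Suc) auto
  also have "Suc (card (UNIV :: 'a set) - 1) = card (UNIV :: 'a set)"
    using finite_UNIV_card_ge_0[where ?'a = 'a] by simp
  also have "(\<Prod>y\<in>UNIV-{0}. x * y) = (\<Prod>y\<in>UNIV-{0}. y)"
    by (rule prod.reindex_bij_witness[of _ "\<lambda>y. y / x" "\<lambda>y. x * y"]) (use False in auto)
  finally show ?thesis
    by simp
qed (use finite_UNIV_card_ge_0[where ?'a = 'a] in auto)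

lemma finfield_pow_card_pow:
  fixes x :: "'a::{field,finite}"
  shows "x ^ (CARD('a) ^ m) = x"
  by (induction m) (simp_all add: finfield_pow_card power_mult)

lemma prime_CHAR_fin: "prime CHAR('a::{field,finite})"
  using prime_CHAR_semidom[where ?'a='a] finite_imp_CHAR_pos[where ?'a='a] by auto


lemma card_is_CHAR_pow: "\<exists>r. CARD('a::{field,finite}) = CHAR('a) ^ r"
proof -
  define p where "p = CHAR('a)"
  define q where "q = CARD('a)"
  have pp: "prime p" unfolding p_def by (rule prime_CHAR_fin)
  have q0: "q > 0" unfolding q_def by simp
  have pnu: "\<not> is_unit p" using pp by auto
  obtain s where qs: "q = p ^ multiplicity p q * s" and nd: "\<not> p dvd s"
    using multiplicity_decompose'[of q p, OF _ pnu] q0 by auto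
  define r where "r = multiplicity p q"
  have "p dvd q"
  proof -
    have "(\<Sum>x\<in>(UNIV::'a set). x) = (\<Sum>x\<in>UNIV. x + 1)"
      by (rule sum.reindex_bij_witness[of _ "\<lambda>x. x + 1" "\<lambda>x. x - 1"]) auto
    then have "of_nat q = (0::'a)" unfolding q_def by (simp add: sum.distrib)
    then show ?thesis unfolding p_def by (simp add: of_nat_eq_0_iff_char_dvd)
  qed
  then have r1: "r \<ge> 1" using q0 pp unfolding r_def
    using multiplicity_gt_zero_iff[of q p] pnu by (simp add: Suc_le_eq)
  have s0: "s > 0" using qs q0 by (cases s) auto
  have "s = 1"
  proof (rule ccontr)
    assume "s \<noteq> 1"
    with s0 have s2: "s \<ge> 2" by simp
    have p2: "p \<ge> 2" using pp prime_ge_2_nat by blast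
    have "p ^ r \<ge> p ^ 1" using r1 p2 by (intro power_increasing) auto
    with p2 have "p ^ r \<ge> 2" by simp
    then have sq: "s < q" using qs s0 unfolding r_def[symmetric] by (simp add: mult.commute)
    define F where "F = (\<lambda>u::'a. u ^ (p ^ r))"
    have Fadd: "(u + w) ^ (p ^ r) = u ^ (p ^ r) + w ^ (p ^ r)" for u w :: 'a
      by (rule freshmans_dream') (use pp in \<open>auto simp: p_def\<close>)
    have "inj F"
    proof (rule injI)
      fix u w assume "F u = F w"
      have "((u - w) + w) ^ (p ^ r) = (u - w) ^ (p ^ r) + w ^ (p ^ r)" by (rule Fadd)
      then have "(u - w) ^ (p ^ r) = 0" using \<open>F u = F w\<close> unfolding F_def by simp
      then show "u = w" by simp
    qed
    then have surjF: "surj F" using finite_UNIV_inj_surj[of F] by simp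
    have key: "(1 + b) ^ s = 1 + b ^ s" for b :: 'a
    proof -
      obtain u where b: "b = F u" using surjF by (metis surjD)
      have e1: "(1 + u) ^ q = 1 + u" unfolding q_def by (rule finfield_pow_card)
      have e2: "u ^ q = u" unfolding q_def by (rule finfield_pow_card)
      have "(1 + u) ^ q = ((1 + u) ^ (p ^ r)) ^ s" using qs unfolding r_def[symmetric] by (simp add: power_mult)
      also have "\<dots> = (1 + b) ^ s" using Fadd[of 1 u] b unfolding F_def by simp
      finally have A: "(1 + b) ^ s = 1 + u" using e1 by simp
      have "u ^ q = b ^ s" using qs b unfolding r_def[symmetric] F_def by (simp add: power_mult)
      with e2 A show ?thesis by simp
    qed
    have PE: "[:1, 1:] ^ s = monom (1::'a) s + 1"
    proof (rule poly_eqI_degree[of UNIV])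
      show "poly ([:1, 1:] ^ s) x = poly (monom 1 s + 1) x" for x :: 'a
        using key[of x] by (simp add: poly_monom add.commute)
      show "degree ([:1::'a, 1:] ^ s) < card (UNIV::'a set)"
        using sq by (simp add: degree_linear_power q_def)
      have "degree (monom (1::'a) s + 1) \<le> s"
        by (rule order.trans[OF degree_add_le_max]) (auto simp: degree_monom_le)
      then show "degree (monom (1::'a) s + 1) < card (UNIV::'a set)"
        using sq q_def by simp
    qed
    have c1: "coeff (monom (1::'a) s + 1) 1 = 0" using s2 by simp
    have X1: "[:1::'a, 1:] = monom 1 1 + 1" by (simp add: monom_Suc one_pCons)
    have "[:1::'a, 1:] ^ s = (\<Sum>k\<le>s. of_nat (s choose k) * monom 1 1 ^ k * 1 ^ (s - k))"
      unfolding X1 by (rule binomial_ring)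
    also have "\<dots> = (\<Sum>k\<le>s. smult (of_nat (s choose k)) (monom 1 k))"
      by (intro sum.cong refl) (simp add: monom_power of_nat_poly)
    finally have "coeff ([:1::'a, 1:] ^ s) 1 = (\<Sum>k\<le>s. of_nat (s choose k) * coeff (monom 1 k) 1)"
      by (simp add: coeff_sum)
    also have "\<dots> = (\<Sum>k\<in>{1}. of_nat (s choose k) * coeff (monom (1::'a) k) 1)"
      by (rule sum.mono_neutral_right) (use s2 in auto)
    finally have "coeff ([:1::'a, 1:] ^ s) 1 = of_nat s" by simp
    with PE c1 have "of_nat s = (0::'a)" by simp
    then have "p dvd s" unfolding p_def by (simp add: of_nat_eq_0_iff_char_dvd)
    with nd show False by simp
  qed
  then show ?thesis using qs unfolding p_def q_def by auto
qed



lemma fls_add_pow_Q: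
  fixes x y :: "'a::{field,finite} fls"
  shows "(x + y) ^ (CARD('a) ^ m) = x ^ (CARD('a) ^ m) + y ^ (CARD('a) ^ m)"
proof -
  obtain r where r: "CARD('a) = CHAR('a) ^ r" using card_is_CHAR_pow by blast
  have pr: "prime CHAR('a fls)" using prime_CHAR_fin[where ?'a='a] by simp
  show ?thesis
    by (rule freshmans_dream'[OF pr, of _ "r*m"]) (simp add: r power_mult)
qed

lemma fls_sum_pow_Q:
  fixes f :: "'b \<Rightarrow> 'a::{field,finite} fls"
  shows "(sum f A) ^ (CARD('a) ^ m) = (\<Sum>i\<in>A. f i ^ (CARD('a) ^ m))"
proof -
  obtain r where r: "CARD('a) = CHAR('a) ^ r" using card_is_CHAR_pow by blast
  have pr: "prime CHAR('a fls)" using prime_CHAR_fin[where ?'a='a] by simp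
  show ?thesis
    by (rule freshmans_dream_sum'[OF pr, of _ "r*m"]) (simp add: r power_mult)
qed

lemma frob_fls:
  fixes x :: "'a::{field,finite} fls"
  shows "x ^ (CARD('a) ^ m) = fls_compose_power x (CARD('a) ^ m)"
proof (rule fls_eqI)
  fix n :: int
  define Q where "Q = CARD('a) ^ m"
  have Q1: "Q \<ge> 1" unfolding Q_def by simp
  define N where "N = max (n + 1) 0"
  define v where "v = fls_subdegree x"
  define mon where "mon = (\<lambda>k. fls_shift (-k) (fls_const (x $$ k)))"
  define P where "P = (\<Sum>k\<in>{v..<N}. mon k)"
  define R where "R = x - P"
  have monn: "mon k $$ j = (if j = k then x $$ k else 0)" for k j
    unfolding mon_def by simp
  have Pn: "P $$ j = (if v \<le> j \<and> j < N then x $$ j else 0)" for j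
  proof -
    have "P $$ j = (\<Sum>k\<in>{v..<N}. mon k $$ j)" unfolding P_def
      by (induction rule: infinite_finite_induct) auto
    also have "\<dots> = (\<Sum>k\<in>{v..<N}. if j = k then x $$ k else 0)" by (simp add: monn)
    also have "\<dots> = (if v \<le> j \<and> j < N then x $$ j else 0)"
      by (simp add: sum.delta)
    finally show ?thesis .
  qed
  have Rn: "R $$ j = 0" if "j < N" for j
    using that unfolding R_def by (auto simp: Pn v_def)
  have xPR: "x = P + R" unfolding R_def by simp
  have "R ^ Q $$ n = 0"
  proof (cases "R = 0")
    case False
    have "N \<le> fls_subdegree R" by (rule fls_subdegree_geI[OF False]) (use Rn in auto)
    then have "int Q * N \<le> fls_subdegree (R ^ Q)" using Q1
      by (simp add: fls_subdegree_pow)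
    moreover have "N \<le> int Q * N" using Q1 N_def
      by (metis max.cobounded2 mult_le_cancel_right1 of_nat_1 of_nat_le_iff linorder_not_less order_le_less_trans zero_less_one)
    moreover have "n < N" unfolding N_def by simp
    ultimately show ?thesis by simp
  qed (use Q1 in \<open>simp add: zero_power\<close>)
  moreover have "fls_compose_power R Q $$ n = 0"
  proof -
    have "n div int Q < N"
    proof (cases "n \<ge> 0")
      case True
      then have "n div int Q \<le> n" using zdiv_mono2[of n 1 "int Q"] Q1 by simp
      then show ?thesis unfolding N_def by simp
    next
      case False
      then have "n div int Q < 0" using Q1 by (simp add: div_neg_pos_less0)
      then show ?thesis unfolding N_def by simp
    qed
    then show ?thesis using Q1 by (simp add: fls_nth_compose_power Rn)
  qed
  moreover have "P ^ Q = fls_compose_power P Q"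
  proof -
    have "P ^ Q = (\<Sum>k\<in>{v..<N}. mon k ^ Q)" unfolding P_def Q_def by (rule fls_sum_pow_Q)
    also have "\<dots> = (\<Sum>k\<in>{v..<N}. fls_compose_power (mon k) Q)"
    proof (intro sum.cong refl)
      fix k
      have "mon k ^ Q = fls_shift (int Q * (-k)) (fls_const ((x $$ k) ^ Q))"
        unfolding mon_def by (simp add: fls_shifted_pow flip: fls_const_power)
      also have "(x $$ k) ^ Q = x $$ k" unfolding Q_def by (rule finfield_pow_card_pow)
      finally show "mon k ^ Q = fls_compose_power (mon k) Q"
        unfolding mon_def using Q1 by simp
    qed
    also have "\<dots> = fls_compose_power P Q" unfolding P_def
      by (induction rule: infinite_finite_induct) auto
    finally show ?thesis .
  qed
  ultimately show "x ^ CARD('a) ^ m $$ n = fls_compose_power x (CARD('a) ^ m) $$ n"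
    unfolding Q_def[symmetric] using fls_add_pow_Q[of P R m]
    by (subst (1 2) xPR) (simp add: Q_def)
qed




lemma cp_inj:
  assumes "d > 0" "fls_compose_power (x :: 'a::zero fls) d = fls_compose_power y d"
  shows "x = y"
proof (rule fls_eqI)
  fix k
  have "fls_compose_power x d $$ (k * int d) = fls_compose_power y d $$ (k * int d)" using assms by simp
  then show "x $$ k = y $$ k" using assms(1) by (simp add: fls_nth_compose_power)
qed

lemma qroot_id: "qroot m (y :: 'a::{field,finite} fls) = y"
  unfolding qroot_def embKm_def
proof (rule the_equality)
  show "y ^ CARD('a) ^ m = fls_compose_power y (CARD('a) ^ m)" by (rule frob_fls)
  fix z :: "'a fls" assume "z ^ CARD('a) ^ m = fls_compose_power y (CARD('a) ^ m)"
  then have "fls_compose_power z (CARD('a) ^ m) = fls_compose_power y (CARD('a) ^ m)"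
    by (simp add: frob_fls)
  then show "z = y" by (rule cp_inj[rotated]) simp
qed

lemma card_ge2: "real CARD('a::{field,finite}) \<ge> 2"
proof -
  have "{0::'a, 1} \<subseteq> UNIV" by simp
  then have "card {0::'a, 1} \<le> CARD('a)" by (intro card_mono) auto
  then show ?thesis by simp
qed

lemma absK_nonneg: "absK x \<ge> 0"
  by (simp add: absK_def)

lemma absK_0 [simp]: "absK 0 = 0"
  by (simp add: absK_def)

lemma absK_eq_0_iff [simp]: "absK (x :: 'a::{field,finite} fls) = 0 \<longleftrightarrow> x = 0"
  using card_ge2[where ?'a='a] by (simp add: absK_def)

lemma absK_pos: "(x :: 'a::{field,finite} fls) \<noteq> 0 \<Longrightarrow> absK x > 0"
  using card_ge2[where ?'a='a] by (simp add: absK_def)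

lemma absK_mult: "absK ((x :: 'a::{field,finite} fls) * y) = absK x * absK y"
  using card_ge2[where ?'a='a]
  by (auto simp add: absK_def powr_add[symmetric] algebra_simps)

lemma absK_one [simp]: "absK (1 :: 'a::{field,finite} fls) = 1"
  using card_ge2[where ?'a='a] by (simp add: absK_def)

lemma absK_power: "absK ((x :: 'a::{field,finite} fls) ^ n) = absK x ^ n"
  by (induction n) (simp_all add: absK_mult)

lemma absK_uminus [simp]: "absK (- (x :: 'a::{field,finite} fls)) = absK x"
  by (simp add: absK_def)

lemma absK_minus_commute: "absK ((x :: 'a::{field,finite} fls) - y) = absK (y - x)"
  by (metis absK_uminus minus_diff_eq)

lemma absK_ultra: "absK ((x :: 'a::{field,finite} fls) + y) \<le> max (absK x) (absK y)"
proof (cases "x = 0 \<or> y = 0 \<or> x + y = 0")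
  case True
  then show ?thesis using absK_nonneg[of x] absK_nonneg[of y] by auto
next
  case False
  then have "fls_subdegree (x + y) \<ge> min (fls_subdegree x) (fls_subdegree y)"
    by (intro fls_plus_subdegree) auto
  then have "real CARD('a) powr (- real_of_int (fls_subdegree (x + y)))
      \<le> real CARD('a) powr (- real_of_int (min (fls_subdegree x) (fls_subdegree y)))"
    using card_ge2[where ?'a='a] by (intro powr_mono) auto
  also have "\<dots> = max (real CARD('a) powr (- real_of_int (fls_subdegree x)))
                        (real CARD('a) powr (- real_of_int (fls_subdegree y)))"
    using card_ge2[where ?'a='a] by (auto simp: min_def max_def)
  finally show ?thesis using False by (simp add: absK_def)
qed

lemma absK_add_le: "absK ((x :: 'a::{field,finite} fls) + y) \<le> absK x + absK y"
  using absK_ultra[of x y] absK_nonneg[of x] absK_nonneg[of y] by linarith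

lemma absK_add_bound:
  "absK (x :: 'a::{field,finite} fls) \<le> B \<Longrightarrow> absK y \<le> B \<Longrightarrow> absK (x + y) \<le> B"
  using absK_ultra[of x y] by linarith

lemma absK_diff_bound:
  "absK (x :: 'a::{field,finite} fls) \<le> B \<Longrightarrow> absK y \<le> B \<Longrightarrow> absK (x - y) \<le> B"
  using absK_add_bound[of x B "-y"] by simp

lemma absK_sum_bound:
  fixes f :: "'b \<Rightarrow> 'a::{field,finite} fls"
  assumes "B \<ge> 0" "\<And>i. i \<in> A \<Longrightarrow> absK (f i) \<le> B"
  shows "absK (sum f A) \<le> B"
  using assms
  by (induction A rule: infinite_finite_induct) (auto intro!: absK_add_bound)

lemma absK_sum_le:
  fixes f :: "'b \<Rightarrow> 'a::{field,finite} fls"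
  shows "absK (sum f A) \<le> (\<Sum>i\<in>A. absK (f i))"
  by (induction A rule: infinite_finite_induct) (auto intro: order.trans[OF absK_add_le])

lemma absK_cp:
  "absK (fls_compose_power (x :: 'a::{field,finite} fls) (CARD('a) ^ m)) = absK x ^ (CARD('a) ^ m)"
  by (simp flip: frob_fls add: absK_power)

lemma absK_shift:
  "absK (fls_shift (- int j) (x :: 'a::{field,finite} fls)) = absK x / real CARD('a) ^ j"
proof (cases "x = 0")
  case False
  then show ?thesis using card_ge2[where ?'a='a]
    by (simp add: absK_def fls_shift_eq0_iff powr_diff powr_realpow powr_minus divide_inverse
                  algebra_simps flip: powr_add)
qed (simp)




lift_definition fls_sect :: "nat \<Rightarrow> nat \<Rightarrow> 'a::zero fls \<Rightarrow> 'a fls" is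
  "\<lambda>Q j f k. if Q > 0 then f (k * int Q + int j) else 0"
proof -
  fix Q j :: nat and f :: "int \<Rightarrow> 'a"
  assume "\<forall>\<^sub>\<infinity>n. f (- int n) = 0"
  then obtain M where M: "\<forall>n>M. f (- int n) = 0" by (auto simp: MOST_nat)
  have "\<forall>n>M + j. (if Q > 0 then f (- int n * int Q + int j) else 0) = 0"
  proof (intro allI impI)
    fix n assume n: "n > M + j"
    show "(if Q > 0 then f (- int n * int Q + int j) else 0) = 0"
    proof (cases "Q > 0")
      case True
      then have "n * Q \<ge> n" by simp
      then have "n * Q - j > M" using n by linarith
      then have "f (- int (n * Q - j)) = 0" using M by blast
      moreover have "j \<le> n * Q" using \<open>n * Q \<ge> n\<close> n by linarith
      then have "- int (n * Q - j) = - int n * int Q + int j" by (simp add: of_nat_diff)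
      ultimately show ?thesis using True by simp
    qed simp
  qed
  then show "\<forall>\<^sub>\<infinity>n. (if Q > 0 then f (- int n * int Q + int j) else 0) = 0"
    unfolding MOST_nat by blast
qed

lemma fls_sect_nth: "Q > 0 \<Longrightarrow> fls_sect Q j f $$ k = f $$ (k * int Q + int j)"
  by transfer simp

lemma fls_sect_add: "fls_sect Q j (f + g) = fls_sect Q j f + fls_sect Q j (g :: 'a::monoid_add fls)"
  by transfer auto

lemma fls_sect_diff: "fls_sect Q j (f - g) = fls_sect Q j f - fls_sect Q j (g :: 'a::group_add fls)"
  by transfer auto

lemma fls_sect_0 [simp]: "fls_sect Q j (0 :: 'a::zero fls) = 0"
  by transfer auto

lemma fls_sect_sum: "fls_sect Q j (sum f A) = (\<Sum>i\<in>A. fls_sect Q j (f i :: 'a::comm_monoid_add fls))"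
  by (induction A rule: infinite_finite_induct) (auto simp: fls_sect_add)

lemma fls_nth_sum: "(sum f A) $$ k = (\<Sum>i\<in>A. (f i :: 'a::comm_monoid_add fls) $$ k)"
  by (induction A rule: infinite_finite_induct) auto

definition recon :: "nat \<Rightarrow> (nat \<Rightarrow> 'a::{field,finite} fls) \<Rightarrow> 'a fls" where
  "recon Q b = (\<Sum>j<Q. fls_shift (- int j) (fls_compose_power (b j) Q))"

lemma dvd_shift_iff:
  fixes n :: int
  assumes "j < Q"
  shows "int Q dvd n - int j \<longleftrightarrow> n mod int Q = int j"
proof -
  have "int Q dvd n - int j \<longleftrightarrow> n mod int Q = int j mod int Q"
    by (simp add: mod_eq_dvd_iff)
  also have "int j mod int Q = int j" using assms by simp
  finally show ?thesis .
qed

lemma recon_sect: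
  fixes y :: "'a::{field,finite} fls"
  assumes Q: "Q > 0"
  shows "recon Q (\<lambda>j. fls_sect Q j y) = y"
proof (rule fls_eqI)
  fix n :: int
  define j0 where "j0 = nat (n mod int Q)"
  have j0: "j0 < Q" "int j0 = n mod int Q" using Q unfolding j0_def
    by (auto simp: nat_less_iff)
  have "recon Q (\<lambda>j. fls_sect Q j y) $$ n =
      (\<Sum>j<Q. fls_compose_power (fls_sect Q j y) Q $$ (n - int j))"
    unfolding recon_def by (induction rule: infinite_finite_induct) auto
  also have "\<dots> = (\<Sum>j<Q. if j = j0 then y $$ n else 0)"
  proof (intro sum.cong refl)
    fix j assume j: "j \<in> {..<Q}"
    have "fls_compose_power (fls_sect Q j y) Q $$ (n - int j) =
        (if int Q dvd n - int j then y $$ ((n - int j) div int Q * int Q + int j) else 0)"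
      using Q by (simp add: fls_nth_compose_power fls_sect_nth)
    also have "\<dots> = (if j = j0 then y $$ n else 0)"
    proof -
      have "int Q dvd n - int j \<longleftrightarrow> j = j0" using dvd_shift_iff[of j Q n] j j0 by auto
      moreover have "int Q dvd n - int j \<Longrightarrow> (n - int j) div int Q * int Q + int j = n"
        by auto
      ultimately show ?thesis by auto
    qed
    finally show "fls_compose_power (fls_sect Q j y) Q $$ (n - int j) = (if j = j0 then y $$ n else 0)" .
  qed
  also have "\<dots> = y $$ n" using j0 by (simp add: sum.delta)
  finally show "recon Q (\<lambda>j. fls_sect Q j y) $$ n = y $$ n" .
qed

lemma sect_recon:
  fixes b :: "nat \<Rightarrow> 'a::{field,finite} fls"
  assumes Q: "Q > 0" and i: "i < Q"
  shows "fls_sect Q i (recon Q b) = b i"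
proof (rule fls_eqI)
  fix k :: int
  have "fls_sect Q i (recon Q b) $$ k = (\<Sum>j<Q. fls_compose_power (b j) Q $$ (k * int Q + int i - int j))"
    unfolding recon_def using Q by (simp add: fls_sect_nth fls_nth_sum algebra_simps)
  also have "\<dots> = (\<Sum>j<Q. if j = i then b i $$ k else 0)"
  proof (intro sum.cong refl)
    fix j assume j: "j \<in> {..<Q}"
    have "int Q dvd k * int Q + int i - int j \<longleftrightarrow> (k * int Q + int i) mod int Q = int j"
      using dvd_shift_iff[of j Q] j by auto
    also have "(k * int Q + int i) mod int Q = int i" using i by simp
    finally have D: "int Q dvd k * int Q + int i - int j \<longleftrightarrow> j = i" by auto
    show "fls_compose_power (b j) Q $$ (k * int Q + int i - int j) = (if j = i then b i $$ k else 0)"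
      using Q D by (auto simp: fls_nth_compose_power)
  qed
  also have "\<dots> = b i $$ k" using i by (simp add: sum.delta)
  finally show "fls_sect Q i (recon Q b) $$ k = b i $$ k" .
qed




lemma shift_cp_nth:
  fixes y :: "'a::{field,finite} fls"
  assumes Q: "Q > 0" and j: "j < Q"
  shows "fls_shift (- int j) (fls_compose_power (fls_sect Q j y) Q) $$ n =
         (if int Q dvd n - int j then y $$ n else 0)"
proof -
  have "fls_shift (- int j) (fls_compose_power (fls_sect Q j y) Q) $$ n =
        (if int Q dvd n - int j then y $$ ((n - int j) div int Q * int Q + int j) else 0)"
    using Q by (simp add: fls_nth_compose_power fls_sect_nth)
  also have "\<dots> = (if int Q dvd n - int j then y $$ n else 0)" by auto
  finally show ?thesis .
qed

lemma recon_bound: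
  fixes b :: "nat \<Rightarrow> 'a::{field,finite} fls"
  shows "absK (recon (CARD('a)^m) b) \<le> (\<Sum>j<CARD('a)^m. absK (b j) ^ (CARD('a)^m))"
  unfolding recon_def
proof (rule order.trans[OF absK_sum_le], intro sum_mono)
  fix j
  have "absK (fls_shift (- int j) (fls_compose_power (b j) (CARD('a) ^ m))) =
        absK (b j) ^ (CARD('a)^m) / real CARD('a) ^ j"
    by (simp add: absK_shift absK_cp)
  also have "\<dots> \<le> absK (b j) ^ (CARD('a)^m) / 1"
  proof (rule divide_left_mono)
    show "1 \<le> real CARD('a) ^ j" using card_ge2[where ?'a='a] by (intro one_le_power) simp
    then show "0 < real CARD('a) ^ j * 1" by simp
  qed (simp add: absK_nonneg)
  finally show "absK (fls_shift (- int j) (fls_compose_power (b j) (CARD('a) ^ m)))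
                \<le> absK (b j) ^ (CARD('a)^m)" by simp
qed

lemma sect_bound:
  fixes y :: "'a::{field,finite} fls"
  assumes j: "j < CARD('a)^m"
  shows "absK (fls_sect (CARD('a)^m) j y) ^ (CARD('a)^m) \<le> real CARD('a) ^ j * absK y"
proof -
  define Q where "Q = CARD('a)^m"
  have Q: "Q > 0" unfolding Q_def by simp
  define P where "P = fls_shift (- int j) (fls_compose_power (fls_sect Q j y) Q)"
  have jQ: "j < Q" using j Q_def by simp
  have Pn: "P $$ n = (if int Q dvd n - int j then y $$ n else 0)" for n
    unfolding P_def by (rule shift_cp_nth[OF Q jQ])
  have aP: "absK P = absK (fls_sect Q j y) ^ Q / real CARD('a) ^ j"
    unfolding P_def Q_def by (simp add: absK_shift absK_cp)
  have "absK P \<le> absK y"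
  proof (cases "P = 0")
    case False
    have y0: "y \<noteq> 0"
    proof
      assume "y = 0"
      then have "P = 0" by (intro fls_eqI) (simp add: Pn)
      with False show False by simp
    qed
    have "fls_subdegree y \<le> fls_subdegree P"
      by (rule fls_subdegree_geI[OF False]) (simp add: Pn)
    then show ?thesis using False y0 card_ge2[where ?'a='a]
      by (simp add: absK_def)
  qed (simp add: absK_nonneg)
  then show ?thesis using aP card_ge2[where ?'a='a] unfolding Q_def
    by (simp add: divide_le_eq mult.commute)
qed

lemma recon_bound2:
  fixes y :: "'a::{field,finite} fls"
  assumes B: "B \<ge> 0"
    and h: "\<And>j. j < CARD('a)^m \<Longrightarrow> absK (fls_sect (CARD('a)^m) j y) ^ (CARD('a)^m) \<le> real CARD('a) ^ j * B"
  shows "absK y \<le> B"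
proof -
  have "y = recon (CARD('a)^m) (\<lambda>j. fls_sect (CARD('a)^m) j y)"
    by (rule recon_sect[symmetric]) simp
  also have "absK \<dots> \<le> B" unfolding recon_def
  proof (rule absK_sum_bound[OF B])
    fix j assume "j \<in> {..<CARD('a)^m}"
    then have "absK (fls_sect (CARD('a)^m) j y) ^ (CARD('a)^m) \<le> real CARD('a) ^ j * B"
      using h by simp
    then show "absK (fls_shift (- int j) (fls_compose_power (fls_sect (CARD('a) ^ m) j y) (CARD('a) ^ m))) \<le> B"
      using card_ge2[where ?'a='a]
      by (simp add: absK_shift absK_cp divide_le_eq mult.commute)
  qed
  finally show ?thesis .
qed

lemma recon_diff: "recon Q (\<lambda>j. b j - c j) = recon Q b - recon Q c"
  unfolding recon_def by (simp add: sum_subtractf)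

lemma recon_sum: "recon Q (\<lambda>j. \<Sum>n\<in>A. b n j) = (\<Sum>n\<in>A. recon Q (b n))"
  unfolding recon_def
  by (induction A rule: infinite_finite_induct) (simp_all add: sum.distrib)

lemma recon_mult_cp:
  "recon Q b * fls_compose_power c Q = recon Q (\<lambda>j. b j * c)"
  unfolding recon_def by (simp add: sum_distrib_right fls_shifted_times_simps)

lemma sect_mult_cp:
  fixes a c :: "'a::{field,finite} fls"
  assumes "Q > 0" "j < Q"
  shows "fls_sect Q j (a * fls_compose_power c Q) = fls_sect Q j a * c"
proof -
  have "a * fls_compose_power c Q = recon Q (\<lambda>i. fls_sect Q i a) * fls_compose_power c Q"
    by (simp only: recon_sect[OF assms(1)])
  also have "\<dots> = recon Q (\<lambda>i. fls_sect Q i a * c)" by (rule recon_mult_cp)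
  finally show ?thesis using sect_recon[OF assms] by simp
qed




definition cK :: "'a::{field,finite} itself \<Rightarrow> real" where
  "cK _ = log 2 (real CARD('a))"

lemma cK_pos: "cK (TYPE('a::{field,finite})) > 0"
  using card_ge2[where ?'a='a] unfolding cK_def by simp

lemma dist_fls_0: "dist (z :: 'a::{field,finite} fls) 0 = (if z = 0 then 0 else 2 powr (- real_of_int (fls_subdegree z)))"
proof (cases "z = 0")
  case False
  show ?thesis
  proof (cases "fls_subdegree z \<ge> 0")
    case True
    have "(2::real) ^ nat (fls_subdegree z) = 2 powr real (nat (fls_subdegree z))"
      by (simp add: powr_realpow)
    also have "real (nat (fls_subdegree z)) = real_of_int (fls_subdegree z)" using True by simp
    finally show ?thesis using False True by (simp add: dist_fls_def powr_minus)
  next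
    case F2: False
    have "(2::real) ^ nat (- fls_subdegree z) = 2 powr real (nat (- fls_subdegree z))"
      by (simp add: powr_realpow)
    also have "real (nat (- fls_subdegree z)) = - real_of_int (fls_subdegree z)" using F2 by simp
    finally show ?thesis using False F2 by (simp add: dist_fls_def)
  qed
qed (simp)

lemma dist_fls_diff: "dist (x :: 'a::{field,finite} fls) y = dist (x - y) 0"
  by (simp add: dist_fls_def)

lemma absK_dist: "absK (z :: 'a::{field,finite} fls) = dist z 0 powr cK TYPE('a)"
proof (cases "z = 0")
  case False
  have "dist z 0 powr cK TYPE('a) = (2 powr (- real_of_int (fls_subdegree z))) powr (log 2 (real CARD('a)))"
    using False by (simp add: dist_fls_0 cK_def)
  also have "\<dots> = (2 powr log 2 (real CARD('a))) powr (- real_of_int (fls_subdegree z))"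
    by (simp only: powr_powr mult.commute)
  also have "\<dots> = real CARD('a) powr (- real_of_int (fls_subdegree z))"
    using card_ge2[where ?'a='a] by simp
  finally show ?thesis using False by (simp add: absK_def)
qed (simp add: dist_fls_0)

lemma dist_absK: "dist (z :: 'a::{field,finite} fls) 0 = absK z powr (1 / cK TYPE('a))"
  using cK_pos[where ?'a='a] by (simp add: absK_dist powr_powr)

lemma cont_absK:
  fixes g :: "'x::topological_space \<Rightarrow> 'a::{field,finite} fls"
  shows "continuous_on S g \<longleftrightarrow>
    (\<forall>x\<in>S. \<forall>e>0. eventually (\<lambda>y. absK (g y - g x) < e) (at x within S))"
proof -
  define c where "c = cK TYPE('a)"
  have c: "c > 0" unfolding c_def by (rule cK_pos)
  have eq: "\<And>y x. dist (g y) (g x) = dist (g y - g x) 0" by (rule dist_fls_diff)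
  have "continuous_on S g \<longleftrightarrow> (\<forall>x\<in>S. \<forall>d>0. eventually (\<lambda>y. dist (g y - g x) 0 < d) (at x within S))"
    unfolding continuous_on_def tendsto_iff eq by (rule refl)
  also have "\<dots> \<longleftrightarrow> (\<forall>x\<in>S. \<forall>e>0. eventually (\<lambda>y. absK (g y - g x) < e) (at x within S))"
  proof (intro ball_cong refl iffI allI impI)
    fix x e assume H: "\<forall>d>0. eventually (\<lambda>y. dist (g y - g x) 0 < d) (at x within S)" and e: "(e::real) > 0"
    then have "eventually (\<lambda>y. dist (g y - g x) 0 < e powr (1 / c)) (at x within S)" by simp
    then show "eventually (\<lambda>y. absK (g y - g x) < e) (at x within S)"
    proof eventually_elim
      case (elim y)
      then have "dist (g y - g x) 0 powr c < (e powr (1 / c)) powr c"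
        using c by (intro powr_less_mono2) auto
      then show ?case using c e by (simp add: absK_dist powr_powr c_def)
    qed
  next
    fix x d assume H: "\<forall>e>0. eventually (\<lambda>y. absK (g y - g x) < e) (at x within S)" and d: "(d::real) > 0"
    then have "eventually (\<lambda>y. absK (g y - g x) < d powr c) (at x within S)" by simp
    then show "eventually (\<lambda>y. dist (g y - g x) 0 < d) (at x within S)"
    proof eventually_elim
      case (elim y)
      then have "absK (g y - g x) powr (1 / c) < (d powr c) powr (1 / c)"
        using c absK_nonneg by (intro powr_less_mono2) auto
      then show ?case using c d by (simp add: dist_absK powr_powr c_def)
    qed
  qed
  finally show ?thesis .
qed

lemma cont_diff:
  fixes u w :: "'x::topological_space \<Rightarrow> 'a::{field,finite} fls"
  assumes "continuous_on S u" "continuous_on S w"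
  shows "continuous_on S (\<lambda>x. u x - w x)"
  unfolding cont_absK
proof (intro ballI allI impI)
  fix x and e :: real assume x: "x \<in> S" and e: "e > 0"
  have "eventually (\<lambda>y. absK (u y - u x) < e) (at x within S)"
       "eventually (\<lambda>y. absK (w y - w x) < e) (at x within S)"
    using assms x e unfolding cont_absK by auto
  then show "eventually (\<lambda>y. absK ((u y - w y) - (u x - w x)) < e) (at x within S)"
  proof eventually_elim
    case (elim y)
    have eq: "(u y - w y) - (u x - w x) = (u y - u x) + (w x - w y)" by simp
    have W: "absK (w x - w y) < e" using elim absK_minus_commute[of "w x" "w y"] by simp
    have "absK ((u y - u x) + (w x - w y)) < e"
      using absK_ultra[of "u y - u x" "w x - w y"] elim W by (metis max_less_iff_conj le_less_trans)
    then show ?case by (simp only: eq)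
  qed
qed

lemma cont_add:
  fixes u w :: "'x::topological_space \<Rightarrow> 'a::{field,finite} fls"
  assumes "continuous_on S u" "continuous_on S w"
  shows "continuous_on S (\<lambda>x. u x + w x)"
proof -
  have "continuous_on S (\<lambda>x. - w x)"
    using cont_diff[OF continuous_on_const[of S 0] assms(2)] by simp
  from cont_diff[OF assms(1) this] show ?thesis by simp
qed

lemma cont_sum:
  fixes u :: "'b \<Rightarrow> 'x::topological_space \<Rightarrow> 'a::{field,finite} fls"
  assumes "\<And>i. i \<in> A \<Longrightarrow> continuous_on S (u i)"
  shows "continuous_on S (\<lambda>x. \<Sum>i\<in>A. u i x)"
  using assms
  by (induction A rule: infinite_finite_induct) (auto intro!: cont_add)

lemma cont_cmult:
  fixes u :: "'x::topological_space \<Rightarrow> 'a::{field,finite} fls"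
  assumes "continuous_on S u"
  shows "continuous_on S (\<lambda>x. c * u x)"
proof (cases "c = 0")
  case False
  have ac: "absK c > 0" using False by (rule absK_pos)
  show ?thesis unfolding cont_absK
  proof (intro ballI allI impI)
    fix x and e :: real assume x: "x \<in> S" and e: "e > 0"
    have "eventually (\<lambda>y. absK (u y - u x) < e / absK c) (at x within S)"
      using assms x e ac unfolding cont_absK by auto
    then show "eventually (\<lambda>y. absK (c * u y - c * u x) < e) (at x within S)"
    proof eventually_elim
      case (elim y)
      have "c * u y - c * u x = c * (u y - u x)" by (simp add: algebra_simps)
      then have "absK (c * u y - c * u x) = absK c * absK (u y - u x)"
        by (simp only: absK_mult)
      also have "\<dots> < absK c * (e / absK c)" by (rule mult_strict_left_mono[OF elim ac])
      also have "\<dots> = e" using ac False by (simp add: field_simps)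
      finally show ?case .
    qed
  qed
qed simp

lemma cont_cp:
  fixes u :: "'x::topological_space \<Rightarrow> 'a::{field,finite} fls"
  assumes "continuous_on S u"
  shows "continuous_on S (\<lambda>x. fls_compose_power (u x) (CARD('a)^m))"
  unfolding cont_absK
proof (intro ballI allI impI)
  fix x and e :: real assume x: "x \<in> S" and e: "e > 0"
  define Q where "Q = CARD('a)^m"
  have Q: "Q > 0" unfolding Q_def by simp
  have "eventually (\<lambda>y. absK (u y - u x) < root Q e) (at x within S)"
    using assms x e Q unfolding cont_absK by auto
  then show "eventually (\<lambda>y. absK (fls_compose_power (u y) (CARD('a)^m) - fls_compose_power (u x) (CARD('a)^m)) < e) (at x within S)"
  proof eventually_elim
    case (elim y)
    have "absK (fls_compose_power (u y) (CARD('a)^m) - fls_compose_power (u x) (CARD('a)^m))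
        = absK (u y - u x) ^ Q"
      unfolding Q_def by (simp add: absK_cp flip: fls_compose_power_diff)
    also have "\<dots> < root Q e ^ Q" using elim absK_nonneg Q
      by (intro power_strict_mono) auto
    also have "\<dots> = e" using Q e by simp
    finally show ?case .
  qed
qed

lemma cont_sect:
  fixes u :: "'x::topological_space \<Rightarrow> 'a::{field,finite} fls"
  assumes "continuous_on S u" "j < CARD('a)^m"
  shows "continuous_on S (\<lambda>x. fls_sect (CARD('a)^m) j (u x))"
  unfolding cont_absK
proof (intro ballI allI impI)
  fix x and e :: real assume x: "x \<in> S" and e: "e > 0"
  define Q where "Q = CARD('a)^m"
  have Q: "Q > 0" unfolding Q_def by simp
  have qj: "real CARD('a) ^ j > 0" using card_ge2[where ?'a='a] by simp
  have "eventually (\<lambda>y. absK (u y - u x) < e ^ Q / real CARD('a) ^ j) (at x within S)"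
    using assms x e Q qj unfolding cont_absK by auto
  then show "eventually (\<lambda>y. absK (fls_sect (CARD('a)^m) j (u y) - fls_sect (CARD('a)^m) j (u x)) < e) (at x within S)"
  proof eventually_elim
    case (elim y)
    have "absK (fls_sect Q j (u y) - fls_sect Q j (u x)) ^ Q
        = absK (fls_sect Q j (u y - u x)) ^ Q" by (simp add: fls_sect_diff)
    also have "\<dots> \<le> real CARD('a) ^ j * absK (u y - u x)"
      unfolding Q_def by (rule sect_bound[OF assms(2)])
    also have "\<dots> < real CARD('a) ^ j * (e ^ Q / real CARD('a) ^ j)"
      by (rule mult_strict_left_mono[OF elim qj])
    also have "\<dots> = e ^ Q" using qj by simp
    finally have "absK (fls_sect Q j (u y) - fls_sect Q j (u x)) ^ Q < e ^ Q" .
    then have "absK (fls_sect Q j (u y) - fls_sect Q j (u x)) < e"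
      by (rule power_less_imp_less_base) (use e in simp)
    then show ?case unfolding Q_def .
  qed
qed

lemma bdd_absK:
  fixes u :: "'x::topological_space \<Rightarrow> 'a::{field,finite} fls"
  assumes "compact S" "continuous_on S u"
  shows "bdd_above ((\<lambda>x. absK (u x)) ` S)"
proof -
  have "compact (u ` S)" by (rule compact_continuous_image[OF assms(2,1)])
  then have "bounded (u ` S)" by (rule compact_imp_bounded)
  then obtain B where B: "\<And>y. y \<in> u ` S \<Longrightarrow> dist 0 y \<le> B"
    unfolding bounded_any_center[of _ 0] by blast
  have "absK (u x) \<le> max 0 B powr cK TYPE('a)" if "x \<in> S" for x
  proof -
    have "dist (u x) 0 \<le> max 0 B" using B[of "u x"] that by (simp add: dist_commute)
    then show ?thesis unfolding absK_dist using cK_pos[where ?'a='a]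
      by (intro powr_mono2) auto
  qed
  then show ?thesis by (rule bdd_aboveI2)
qed

lemma supnorm_upper:
  assumes "bdd_above ((\<lambda>x. av (u x)) ` S)" "x \<in> S"
  shows "av (u x) \<le> supnorm av S u"
  unfolding supnorm_def using assms by (intro cSup_upper) auto

lemma supnorm_nonneg:
  assumes "bdd_above ((\<lambda>x. av (u x)) ` S)"
  shows "0 \<le> supnorm av S u"
  unfolding supnorm_def using assms by (intro cSup_upper) auto

lemma supnorm_le:
  assumes "B \<ge> 0" "\<And>x. x \<in> S \<Longrightarrow> av (u x) \<le> B"
  shows "supnorm av S u \<le> B"
  unfolding supnorm_def using assms by (intro cSup_least) auto




lemma root_Sup:
  fixes A :: "real set"
  assumes "Q > 0" "A \<noteq> {}" "bdd_above A"
  shows "root Q (Sup A) = Sup (root Q ` A)"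
proof (rule continuous_at_Sup_mono)
  show "mono (root Q)" using assms(1) by (auto intro: monoI real_root_le_mono)
  show "continuous (at_left (Sup A)) (root Q)"
    by (rule continuous_at_imp_continuous_at_within) (rule isCont_real_root)
qed (use assms in auto)

lemma supnorm_root:
  assumes "Q > 0" "\<And>z. av' z = root Q (av z)" "bdd_above ((\<lambda>x. av (u x)) ` S)"
  shows "supnorm av' S u = root Q (supnorm av S u)"
proof -
  have "supnorm av' S u = Sup (root Q ` insert 0 ((\<lambda>x. av (u x)) ` S))"
    unfolding supnorm_def assms(2) by (simp add: image_image)
  also have "\<dots> = root Q (supnorm av S u)"
    unfolding supnorm_def using assms by (intro root_Sup[symmetric]) auto
  finally show ?thesis .
qed

lemma tendsto0_bdd: "(X \<longlongrightarrow> (0::real)) sequentially \<Longrightarrow> bdd_above (range X)"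
  by (intro Bseq_bdd_above convergent_imp_Bseq convergentI)

lemma absKm_root: "absKm m z = root (CARD('a)^m) (absK (z :: 'a::{field,finite} fls))"
proof (cases "z = 0")
  case False
  have q: "real CARD('a) > 0" using card_ge2[where ?'a='a] by simp
  have "root (CARD('a)^m) (absK z) = absK z powr (1 / real (CARD('a)^m))"
    using False by (intro root_powr_inverse) (auto simp: absK_pos absK_nonneg)
  also have "\<dots> = absKm m z" using False q
    by (simp add: absK_def absKm_def powr_powr)
  finally show ?thesis by simp
qed (simp add: absK_def absKm_def)

lemma onb_transfer:
  fixes f :: "nat \<Rightarrow> 'x::topological_space \<Rightarrow> 'a::{field,finite} fls"
  assumes S: "compact S" and onb: "orthonormal_basis absK S f" and Q: "Q > 0"
    and rel: "\<And>z. av' z = root Q (absK z)"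
  shows "orthonormal_basis av' S f"
proof -
  have fc: "\<And>n. continuous_on S (f n)" and
    ex: "\<And>h. continuous_on S h \<Longrightarrow> (\<exists>!a. (\<lambda>n. absK (a n)) \<longlonglongrightarrow> 0 \<and>
              (\<lambda>N. supnorm absK S (\<lambda>x. h x - (\<Sum>n<N. a n * f n x))) \<longlonglongrightarrow> 0)" and
    nm: "\<And>h a. continuous_on S h \<Longrightarrow> (\<lambda>n. absK (a n)) \<longlonglongrightarrow> 0 \<Longrightarrow>
              (\<lambda>N. supnorm absK S (\<lambda>x. h x - (\<Sum>n<N. a n * f n x))) \<longlonglongrightarrow> 0 \<Longrightarrow>
              supnorm absK S h = (SUP n. absK (a n))"
    using onb unfolding orthonormal_basis_def by blast+
  have pw: "absK z = av' z ^ Q" for z using rel Q absK_nonneg[of z] by simp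
  have T: "(\<lambda>n. av' (X n)) \<longlonglongrightarrow> 0 \<longleftrightarrow> (\<lambda>n. absK (X n)) \<longlonglongrightarrow> 0" for X
  proof
    assume "(\<lambda>n. av' (X n)) \<longlonglongrightarrow> 0"
    then have "(\<lambda>n. av' (X n) ^ Q) \<longlonglongrightarrow> 0 ^ Q" by (intro tendsto_power)
    then have "(\<lambda>n. absK (X n)) \<longlonglongrightarrow> 0 ^ Q" by (simp only: pw)
    then show "(\<lambda>n. absK (X n)) \<longlonglongrightarrow> 0" by (simp only: zero_power[OF Q])
  next
    assume "(\<lambda>n. absK (X n)) \<longlonglongrightarrow> 0"
    then have "(\<lambda>n. root Q (absK (X n))) \<longlonglongrightarrow> root Q 0" by (intro tendsto_real_root)
    then show "(\<lambda>n. av' (X n)) \<longlonglongrightarrow> 0" by (simp add: rel)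
  qed
  have contS: "continuous_on S (\<lambda>x. h x - (\<Sum>n<N. a n * f n x))" if "continuous_on S h" for h a N
    by (intro cont_diff that cont_sum cont_cmult fc)
  have TS: "(\<lambda>N. supnorm av' S (\<lambda>x. h x - (\<Sum>n<N. a n * f n x))) \<longlonglongrightarrow> 0 \<longleftrightarrow>
            (\<lambda>N. supnorm absK S (\<lambda>x. h x - (\<Sum>n<N. a n * f n x))) \<longlonglongrightarrow> 0"
    if h: "continuous_on S h" for h a
  proof -
    have b: "bdd_above ((\<lambda>x. absK (h x - (\<Sum>n<N. a n * f n x))) ` S)" for N
      by (rule bdd_absK[OF S contS[OF h]])
    have e1: "supnorm av' S (\<lambda>x. h x - (\<Sum>n<N. a n * f n x)) =
             root Q (supnorm absK S (\<lambda>x. h x - (\<Sum>n<N. a n * f n x)))" for N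
      by (rule supnorm_root[where u="\<lambda>x. h x - (\<Sum>n<N. a n * f n x)", OF Q rel b[of N]])
    have e2: "supnorm absK S (\<lambda>x. h x - (\<Sum>n<N. a n * f n x)) =
              supnorm av' S (\<lambda>x. h x - (\<Sum>n<N. a n * f n x)) ^ Q" for N
      using e1[of N] Q supnorm_nonneg[where u="\<lambda>x. h x - (\<Sum>n<N. a n * f n x)", OF b[of N]] by simp
    show ?thesis
    proof
      assume "(\<lambda>N. supnorm av' S (\<lambda>x. h x - (\<Sum>n<N. a n * f n x))) \<longlonglongrightarrow> 0"
      then have "(\<lambda>N. supnorm av' S (\<lambda>x. h x - (\<Sum>n<N. a n * f n x)) ^ Q) \<longlonglongrightarrow> 0 ^ Q"
        by (intro tendsto_power)
      then show "(\<lambda>N. supnorm absK S (\<lambda>x. h x - (\<Sum>n<N. a n * f n x))) \<longlonglongrightarrow> 0"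
        by (simp only: e2 zero_power[OF Q])
    next
      assume "(\<lambda>N. supnorm absK S (\<lambda>x. h x - (\<Sum>n<N. a n * f n x))) \<longlonglongrightarrow> 0"
      then have "(\<lambda>N. root Q (supnorm absK S (\<lambda>x. h x - (\<Sum>n<N. a n * f n x)))) \<longlonglongrightarrow> root Q 0"
        by (intro tendsto_real_root)
      then show "(\<lambda>N. supnorm av' S (\<lambda>x. h x - (\<Sum>n<N. a n * f n x))) \<longlonglongrightarrow> 0"
        by (simp add: e1)
    qed
  qed
  show ?thesis unfolding orthonormal_basis_def
  proof (intro conjI allI impI fc)
    fix h :: "'x \<Rightarrow> 'a fls" assume h: "continuous_on S h"
    show "\<exists>!a. (\<lambda>n. av' (a n)) \<longlonglongrightarrow> 0 \<and>
              (\<lambda>N. supnorm av' S (\<lambda>x. h x - (\<Sum>n<N. a n * f n x))) \<longlonglongrightarrow> 0"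
      using ex[OF h] unfolding T TS[OF h] .
    fix a assume "(\<lambda>n. av' (a n)) \<longlonglongrightarrow> 0 \<and>
              (\<lambda>N. supnorm av' S (\<lambda>x. h x - (\<Sum>n<N. a n * f n x))) \<longlonglongrightarrow> 0"
    then have a1: "(\<lambda>n. absK (a n)) \<longlonglongrightarrow> 0" and
      a2: "(\<lambda>N. supnorm absK S (\<lambda>x. h x - (\<Sum>n<N. a n * f n x))) \<longlonglongrightarrow> 0"
      unfolding T TS[OF h] by auto
    have "supnorm av' S h = root Q (supnorm absK S h)"
      by (rule supnorm_root[where u=h, OF Q rel bdd_absK[OF S h]])
    also have "\<dots> = root Q (SUP n. absK (a n))" using nm[OF h a1 a2] by simp
    also have "\<dots> = (SUP n. root Q (absK (a n)))"
      using root_Sup[OF Q _ tendsto0_bdd[OF a1]] by (simp add: image_image)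
    also have "\<dots> = (SUP n. av' (a n))" by (simp add: rel)
    finally show "supnorm av' S h = (SUP n. av' (a n))" .
  qed
qed




lemma sect_root:
  fixes y :: "'a::{field,finite} fls"
  assumes j: "j < CARD('a)^m"
  shows "absK (fls_sect (CARD('a)^m) j y) \<le> root (CARD('a)^m) (real CARD('a) ^ j * absK y)"
proof -
  have "absK (fls_sect (CARD('a)^m) j y) = root (CARD('a)^m) (absK (fls_sect (CARD('a)^m) j y) ^ (CARD('a)^m))"
    by (simp add: real_root_power_cancel absK_nonneg)
  also have "\<dots> \<le> root (CARD('a)^m) (real CARD('a) ^ j * absK y)"
    by (intro real_root_le_mono sect_bound j) simp
  finally show ?thesis .
qed

lemma tendsto_root_mult0:
  "(X \<longlongrightarrow> (0::real)) F \<Longrightarrow> ((\<lambda>n. root Q (c * X n)) \<longlongrightarrow> 0) F"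
  using tendsto_real_root[OF tendsto_mult_right_zero[of X F c], of Q] by simp

lemma sandwich0:
  fixes X Y :: "nat \<Rightarrow> real"
  assumes "\<And>n. 0 \<le> X n" "\<And>n. X n \<le> Y n" "Y \<longlonglongrightarrow> 0"
  shows "X \<longlonglongrightarrow> 0"
  by (rule tendsto_sandwich[of "\<lambda>_. 0" X sequentially Y]) (use assms in auto)

lemma ex1_eq: "\<exists>!x. P x \<Longrightarrow> P a \<Longrightarrow> P b \<Longrightarrow> a = b"
  by blast

lemma onb_frob:
  fixes f :: "nat \<Rightarrow> 'x::topological_space \<Rightarrow> 'a::{field,finite} fls"
  assumes S: "compact S" and onb: "orthonormal_basis absK S f"
  shows "orthonormal_basis absK S (\<lambda>n x. f n x ^ (CARD('a) ^ m))"
proof -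
  define Q where "Q = CARD('a) ^ m"
  have Q: "Q > 0" unfolding Q_def by simp
  define q where "q = real CARD('a)"
  have q: "q \<ge> 2" unfolding q_def by (rule card_ge2)
  define g where "g = (\<lambda>n x. fls_compose_power (f n x) Q)"
  have g_eq: "(\<lambda>n x. f n x ^ (CARD('a) ^ m)) = g" unfolding g_def Q_def by (simp add: frob_fls)
  have fc: "\<And>n. continuous_on S (f n)" and
    ex: "\<And>h. continuous_on S h \<Longrightarrow> (\<exists>!a. (\<lambda>n. absK (a n)) \<longlonglongrightarrow> 0 \<and>
              (\<lambda>N. supnorm absK S (\<lambda>x. h x - (\<Sum>n<N. a n * f n x))) \<longlonglongrightarrow> 0)" and
    nm: "\<And>h a. continuous_on S h \<Longrightarrow> (\<lambda>n. absK (a n)) \<longlonglongrightarrow> 0 \<Longrightarrow>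
              (\<lambda>N. supnorm absK S (\<lambda>x. h x - (\<Sum>n<N. a n * f n x))) \<longlonglongrightarrow> 0 \<Longrightarrow>
              supnorm absK S h = (SUP n. absK (a n))"
    using onb unfolding orthonormal_basis_def by blast+
  have gc: "continuous_on S (g n)" for n unfolding g_def Q_def by (rule cont_cp[OF fc])
  have contF: "continuous_on S (\<lambda>x. h x - (\<Sum>n<N. a n * f n x))" if "continuous_on S h" for h a N
    by (intro cont_diff that cont_sum cont_cmult fc)
  have contG: "continuous_on S (\<lambda>x. h x - (\<Sum>n<N. a n * g n x))" if "continuous_on S h" for h a N
    by (intro cont_diff that cont_sum cont_cmult gc)
  have contH: "continuous_on S (\<lambda>x. fls_sect Q j (h x))" if "continuous_on S h" "j < Q" for h :: "'x \<Rightarrow> 'a fls" and j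
    using cont_sect[OF that(1), of j m] that(2) unfolding Q_def by simp
  have sroot: "absK (fls_sect Q j y) \<le> root Q (q ^ j * absK y)" if "j < Q" for j and y :: "'a fls"
    using sect_root[of j m y] that unfolding Q_def q_def by simp
  have sect_sum: "fls_sect Q j (h - (\<Sum>n<N. c n * g n x)) = fls_sect Q j h - (\<Sum>n<N. fls_sect Q j (c n) * f n x)"
    if "j < Q" for j h c N x
    unfolding g_def using Q that by (simp add: fls_sect_diff fls_sect_sum sect_mult_cp)
  have H1: "(\<lambda>n. absK (fls_sect Q j (c n))) \<longlonglongrightarrow> 0 \<and>
      (\<lambda>N. supnorm absK S (\<lambda>x. fls_sect Q j (h x) - (\<Sum>n<N. fls_sect Q j (c n) * f n x))) \<longlonglongrightarrow> 0"
    if h: "continuous_on S h" and j: "j < Q" and c1: "(\<lambda>n. absK (c n)) \<longlonglongrightarrow> 0"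
      and c2: "(\<lambda>N. supnorm absK S (\<lambda>x. h x - (\<Sum>n<N. c n * g n x))) \<longlonglongrightarrow> 0" for h j c
  proof
    show "(\<lambda>n. absK (fls_sect Q j (c n))) \<longlonglongrightarrow> 0"
      by (rule sandwich0[OF absK_nonneg sroot[OF j] tendsto_root_mult0[OF c1]])
    define sg where "sg = (\<lambda>N. supnorm absK S (\<lambda>x. h x - (\<Sum>n<N. c n * g n x)))"
    have bg: "bdd_above ((\<lambda>x. absK (h x - (\<Sum>n<N. c n * g n x))) ` S)" for N
      by (rule bdd_absK[OF S contG[OF h]])
    have sg0: "sg N \<ge> 0" for N
      unfolding sg_def by (rule supnorm_nonneg[where u="\<lambda>x. h x - (\<Sum>n<N. c n * g n x)", OF bg])
    have bf: "bdd_above ((\<lambda>x. absK (fls_sect Q j (h x) - (\<Sum>n<N. fls_sect Q j (c n) * f n x))) ` S)" for N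
      by (rule bdd_absK[OF S contF[OF contH[OF h j]]])
    show "(\<lambda>N. supnorm absK S (\<lambda>x. fls_sect Q j (h x) - (\<Sum>n<N. fls_sect Q j (c n) * f n x))) \<longlonglongrightarrow> 0"
    proof (rule sandwich0)
      fix N
      show "0 \<le> supnorm absK S (\<lambda>x. fls_sect Q j (h x) - (\<Sum>n<N. fls_sect Q j (c n) * f n x))"
        by (rule supnorm_nonneg) (rule bf)
      show "supnorm absK S (\<lambda>x. fls_sect Q j (h x) - (\<Sum>n<N. fls_sect Q j (c n) * f n x)) \<le> root Q (q ^ j * sg N)"
      proof (rule supnorm_le)
        show "0 \<le> root Q (q ^ j * sg N)" using sg0 q by (intro real_root_ge_zero) simp
        fix x assume x: "x \<in> S"
        have "absK (fls_sect Q j (h x) - (\<Sum>n<N. fls_sect Q j (c n) * f n x))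
            = absK (fls_sect Q j (h x - (\<Sum>n<N. c n * g n x)))" by (simp add: sect_sum[OF j])
        also have "\<dots> \<le> root Q (q ^ j * absK (h x - (\<Sum>n<N. c n * g n x)))" by (rule sroot[OF j])
        also have "\<dots> \<le> root Q (q ^ j * sg N)" unfolding sg_def using Q q
          by (intro real_root_le_mono mult_left_mono) (auto intro: supnorm_upper[OF _ x] bg)
        finally show "absK (fls_sect Q j (h x) - (\<Sum>n<N. fls_sect Q j (c n) * f n x)) \<le> root Q (q ^ j * sg N)" .
      qed
    next
      show "(\<lambda>N. root Q (q ^ j * sg N)) \<longlonglongrightarrow> 0"
        by (rule tendsto_root_mult0) (use c2 in \<open>simp add: sg_def\<close>)
    qed
  qed
  show ?thesis unfolding g_eq orthonormal_basis_def
  proof (intro conjI allI impI gc)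
    fix h :: "'x \<Rightarrow> 'a fls" assume h: "continuous_on S h"
    show "\<exists>!a. (\<lambda>n. absK (a n)) \<longlonglongrightarrow> 0 \<and>
              (\<lambda>N. supnorm absK S (\<lambda>x. h x - (\<Sum>n<N. a n * g n x))) \<longlonglongrightarrow> 0"
    proof (rule ex_ex1I)
      have "\<forall>j. \<exists>a. j < Q \<longrightarrow> (\<lambda>n. absK (a n)) \<longlonglongrightarrow> 0 \<and>
              (\<lambda>N. supnorm absK S (\<lambda>x. fls_sect Q j (h x) - (\<Sum>n<N. a n * f n x))) \<longlonglongrightarrow> 0"
        using ex[OF contH[OF h]] by blast
      from choice[OF this] obtain A where A0: "\<forall>j. j < Q \<longrightarrow> (\<lambda>n. absK (A j n)) \<longlonglongrightarrow> 0 \<and>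
              (\<lambda>N. supnorm absK S (\<lambda>x. fls_sect Q j (h x) - (\<Sum>n<N. A j n * f n x))) \<longlonglongrightarrow> 0"
        by (elim exE)
      then have A: "\<And>j. j < Q \<Longrightarrow> (\<lambda>n. absK (A j n)) \<longlonglongrightarrow> 0 \<and>
              (\<lambda>N. supnorm absK S (\<lambda>x. fls_sect Q j (h x) - (\<Sum>n<N. A j n * f n x))) \<longlonglongrightarrow> 0"
        by simp
      define c where "c = (\<lambda>n. recon Q (\<lambda>j. A j n))"
      have c1: "(\<lambda>n. absK (c n)) \<longlonglongrightarrow> 0"
      proof (rule sandwich0)
        show "absK (c n) \<le> (\<Sum>j<Q. absK (A j n) ^ Q)" for n
          unfolding c_def Q_def by (rule recon_bound)
        have "(\<lambda>n. \<Sum>j<Q. absK (A j n) ^ Q) \<longlonglongrightarrow> (\<Sum>j<Q. 0 ^ Q)"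
          using A by (intro tendsto_sum tendsto_power) auto
        then show "(\<lambda>n. \<Sum>j<Q. absK (A j n) ^ Q) \<longlonglongrightarrow> 0" by (simp only: zero_power[OF Q] sum.neutral_const)
      qed (rule absK_nonneg)
      have decomp: "h x - (\<Sum>n<N. c n * g n x) = recon Q (\<lambda>j. fls_sect Q j (h x) - (\<Sum>n<N. A j n * f n x))"
        for x N
      proof -
        have "(\<Sum>n<N. c n * g n x) = (\<Sum>n<N. recon Q (\<lambda>j. A j n * f n x))"
          unfolding c_def g_def by (simp add: recon_mult_cp)
        also have "\<dots> = recon Q (\<lambda>j. \<Sum>n<N. A j n * f n x)" by (rule recon_sum[symmetric])
        finally have e1: "(\<Sum>n<N. c n * g n x) = recon Q (\<lambda>j. \<Sum>n<N. A j n * f n x)" .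
        have e2: "h x = recon Q (\<lambda>j. fls_sect Q j (h x))" by (rule recon_sect[OF Q, symmetric])
        show ?thesis by (subst e2, subst e1, rule recon_diff[symmetric])
      qed
      define sf where "sf = (\<lambda>j N. supnorm absK S (\<lambda>x. fls_sect Q j (h x) - (\<Sum>n<N. A j n * f n x)))"
      have bf: "bdd_above ((\<lambda>x. absK (fls_sect Q j (h x) - (\<Sum>n<N. A j n * f n x))) ` S)" if "j < Q" for j N
        by (rule bdd_absK[OF S contF[OF contH[OF h that]]])
      have sf0: "sf j N \<ge> 0" if "j < Q" for j N
        unfolding sf_def by (rule supnorm_nonneg) (rule bf[OF that])
      have c2: "(\<lambda>N. supnorm absK S (\<lambda>x. h x - (\<Sum>n<N. c n * g n x))) \<longlonglongrightarrow> 0"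
      proof (rule sandwich0)
        fix N
        have bg: "bdd_above ((\<lambda>x. absK (h x - (\<Sum>n<N. c n * g n x))) ` S)"
          by (rule bdd_absK[OF S contG[OF h]])
        show "0 \<le> supnorm absK S (\<lambda>x. h x - (\<Sum>n<N. c n * g n x))"
          by (rule supnorm_nonneg) (rule bg)
        show "supnorm absK S (\<lambda>x. h x - (\<Sum>n<N. c n * g n x)) \<le> (\<Sum>j<Q. sf j N ^ Q)"
        proof (rule supnorm_le)
          show "0 \<le> (\<Sum>j<Q. sf j N ^ Q)" using sf0 by (intro sum_nonneg) simp
          fix x assume x: "x \<in> S"
          have "absK (h x - (\<Sum>n<N. c n * g n x)) \<le>
                (\<Sum>j<Q. absK (fls_sect Q j (h x) - (\<Sum>n<N. A j n * f n x)) ^ Q)"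
            unfolding decomp Q_def by (rule recon_bound)
          also have "\<dots> \<le> (\<Sum>j<Q. sf j N ^ Q)"
          proof (rule sum_mono)
            fix j assume "j \<in> {..<Q}"
            then have j: "j < Q" by simp
            show "absK (fls_sect Q j (h x) - (\<Sum>n<N. A j n * f n x)) ^ Q \<le> sf j N ^ Q"
              unfolding sf_def
              by (intro power_mono absK_nonneg) (rule supnorm_upper[OF _ x], rule bf[OF j])
          qed
          finally show "absK (h x - (\<Sum>n<N. c n * g n x)) \<le> (\<Sum>j<Q. sf j N ^ Q)" .
        qed
      next
        have "(\<lambda>N. \<Sum>j<Q. sf j N ^ Q) \<longlonglongrightarrow> (\<Sum>j<Q. 0 ^ Q)"
          using A unfolding sf_def by (intro tendsto_sum tendsto_power) auto
        then show "(\<lambda>N. \<Sum>j<Q. sf j N ^ Q) \<longlonglongrightarrow> 0" by (simp only: zero_power[OF Q] sum.neutral_const)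
      qed
      show "\<exists>a. (\<lambda>n. absK (a n)) \<longlonglongrightarrow> 0 \<and>
              (\<lambda>N. supnorm absK S (\<lambda>x. h x - (\<Sum>n<N. a n * g n x))) \<longlonglongrightarrow> 0"
        using c1 c2 by blast
    next
      fix c c' assume c: "(\<lambda>n. absK (c n)) \<longlonglongrightarrow> 0 \<and>
              (\<lambda>N. supnorm absK S (\<lambda>x. h x - (\<Sum>n<N. c n * g n x))) \<longlonglongrightarrow> 0"
        and c': "(\<lambda>n. absK (c' n)) \<longlonglongrightarrow> 0 \<and>
              (\<lambda>N. supnorm absK S (\<lambda>x. h x - (\<Sum>n<N. c' n * g n x))) \<longlonglongrightarrow> 0"
      have eqj: "(\<lambda>n. fls_sect Q j (c n)) = (\<lambda>n. fls_sect Q j (c' n))" if j: "j < Q" for j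
      proof -
        define V where "V = (\<lambda>a. (\<lambda>n. absK (a n)) \<longlonglongrightarrow> 0 \<and>
           (\<lambda>N. supnorm absK S (\<lambda>x. fls_sect Q j (h x) - (\<Sum>n<N. a n * f n x))) \<longlonglongrightarrow> 0)"
        have v0: "\<exists>!a. V a" unfolding V_def by (rule ex[OF contH[OF h j]])
        have v1: "V (\<lambda>n. fls_sect Q j (c n))" unfolding V_def
          by (rule H1[OF h j conjunct1[OF c] conjunct2[OF c]])
        have v2: "V (\<lambda>n. fls_sect Q j (c' n))" unfolding V_def
          by (rule H1[OF h j conjunct1[OF c'] conjunct2[OF c']])
        show ?thesis using v0 v1 v2 by blast
      qed
      have eqj': "fls_sect Q j (c n) = fls_sect Q j (c' n)" if "j \<in> {..<Q}" for j n
        using eqj[of j] that by (simp add: fun_eq_iff)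
      show "c = c'"
      proof
        fix n
        have "c n = recon Q (\<lambda>j. fls_sect Q j (c n))" by (rule recon_sect[OF Q, symmetric])
        also have "\<dots> = recon Q (\<lambda>j. fls_sect Q j (c' n))"
          unfolding recon_def using eqj by (intro sum.cong refl) (simp add: eqj')
        also have "\<dots> = c' n" by (rule recon_sect[OF Q])
        finally show "c n = c' n" .
      qed
    qed
    fix c assume "(\<lambda>n. absK (c n)) \<longlonglongrightarrow> 0 \<and>
              (\<lambda>N. supnorm absK S (\<lambda>x. h x - (\<Sum>n<N. c n * g n x))) \<longlonglongrightarrow> 0"
    then have c1: "(\<lambda>n. absK (c n)) \<longlonglongrightarrow> 0" and
      c2: "(\<lambda>N. supnorm absK S (\<lambda>x. h x - (\<Sum>n<N. c n * g n x))) \<longlonglongrightarrow> 0" by auto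
    show "supnorm absK S h = (SUP n. absK (c n))"
    proof -
      define C where "C = (SUP n. absK (c n))"
      have bc: "bdd_above (range (\<lambda>n. absK (c n)))" by (rule tendsto0_bdd[OF c1])
      have "absK (c 0) \<le> C" unfolding C_def by (rule cSUP_upper[OF _ bc]) simp
      then have C0: "0 \<le> C" using absK_nonneg[of "c 0"] by linarith
      have rb2: "absK y \<le> B" if "B \<ge> 0" "\<And>j. j < Q \<Longrightarrow> absK (fls_sect Q j y) ^ Q \<le> q ^ j * B"
        for y :: "'a fls" and B
        using recon_bound2[of B m y] that unfolding Q_def q_def by blast
      have H1c: "(\<lambda>n. absK (fls_sect Q j (c n))) \<longlonglongrightarrow> 0 \<and>
          (\<lambda>N. supnorm absK S (\<lambda>x. fls_sect Q j (h x) - (\<Sum>n<N. fls_sect Q j (c n) * f n x))) \<longlonglongrightarrow> 0"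
        if j: "j < Q" for j
        by (rule H1[OF h j c1 c2])
      have Hj: "supnorm absK S (\<lambda>x. fls_sect Q j (h x)) = (SUP n. absK (fls_sect Q j (c n)))"
        if j: "j < Q" for j
        by (rule nm[OF contH[OF h j] conjunct1[OF H1c[OF j]] conjunct2[OF H1c[OF j]]])
      have bh: "bdd_above ((\<lambda>x. absK (h x)) ` S)" by (rule bdd_absK[OF S h])
      have bhj: "bdd_above ((\<lambda>x. absK (fls_sect Q j (h x))) ` S)" if j: "j < Q" for j
        by (rule bdd_absK[OF S contH[OF h j]])
      have bcj: "bdd_above (range (\<lambda>n. absK (fls_sect Q j (c n))))" if j: "j < Q" for j
        by (rule tendsto0_bdd[OF conjunct1[OF H1c[OF j]]])
      have sh0: "0 \<le> supnorm absK S h" by (rule supnorm_nonneg) (rule bh)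
      show ?thesis
      proof (rule antisym)
        show "supnorm absK S h \<le> (SUP n. absK (c n))" unfolding C_def[symmetric]
        proof (rule supnorm_le[OF C0])
          fix x assume x: "x \<in> S"
          show "absK (h x) \<le> C"
          proof (rule rb2[OF C0])
            fix j assume j: "j < Q"
            have "absK (fls_sect Q j (h x)) \<le> supnorm absK S (\<lambda>x. fls_sect Q j (h x))"
              by (rule supnorm_upper[OF _ x]) (rule bhj[OF j])
            also have "\<dots> = (SUP n. absK (fls_sect Q j (c n)))" by (rule Hj[OF j])
            also have "\<dots> \<le> root Q (q ^ j * C)"
            proof (rule cSUP_least)
              fix n
              have "absK (fls_sect Q j (c n)) \<le> root Q (q ^ j * absK (c n))" by (rule sroot[OF j])
              also have "\<dots> \<le> root Q (q ^ j * C)" using Q q unfolding C_def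
                by (intro real_root_le_mono mult_left_mono cSUP_upper[OF _ bc]) auto
              finally show "absK (fls_sect Q j (c n)) \<le> root Q (q ^ j * C)" .
            qed simp
            finally have "absK (fls_sect Q j (h x)) \<le> root Q (q ^ j * C)" .
            then have "absK (fls_sect Q j (h x)) ^ Q \<le> root Q (q ^ j * C) ^ Q"
              by (intro power_mono absK_nonneg)
            also have "\<dots> = q ^ j * C" using Q q C0 by simp
            finally show "absK (fls_sect Q j (h x)) ^ Q \<le> q ^ j * C" .
          qed
        qed
      next
        show "(SUP n. absK (c n)) \<le> supnorm absK S h"
        proof (rule cSUP_least)
          fix n
          show "absK (c n) \<le> supnorm absK S h"
          proof (rule rb2[OF sh0])
            fix j assume j: "j < Q"
            have "absK (fls_sect Q j (c n)) \<le> (SUP n. absK (fls_sect Q j (c n)))"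
              by (rule cSUP_upper[OF _ bcj[OF j]]) simp
            also have "\<dots> = supnorm absK S (\<lambda>x. fls_sect Q j (h x))" by (rule Hj[OF j, symmetric])
            also have "\<dots> \<le> root Q (q ^ j * supnorm absK S h)"
            proof (rule supnorm_le)
              show "0 \<le> root Q (q ^ j * supnorm absK S h)" using sh0 q by (intro real_root_ge_zero) simp
              fix x assume x: "x \<in> S"
              have "absK (fls_sect Q j (h x)) \<le> root Q (q ^ j * absK (h x))" by (rule sroot[OF j])
              also have "\<dots> \<le> root Q (q ^ j * supnorm absK S h)" using Q q
                by (intro real_root_le_mono mult_left_mono) (auto intro: supnorm_upper[OF _ x] bh)
              finally show "absK (fls_sect Q j (h x)) \<le> root Q (q ^ j * supnorm absK S h)" .
            qed
            finally have "absK (fls_sect Q j (c n)) \<le> root Q (q ^ j * supnorm absK S h)" .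
            then have "absK (fls_sect Q j (c n)) ^ Q \<le> root Q (q ^ j * supnorm absK S h) ^ Q"
              by (intro power_mono absK_nonneg)
            also have "\<dots> = q ^ j * supnorm absK S h" using Q q sh0 by simp
            finally show "absK (fls_sect Q j (c n)) ^ Q \<le> q ^ j * supnorm absK S h" .
          qed
        qed simp
      qed
    qed
  qed
qed


theorem proposition2:
  fixes S :: "'x::t2_space set" and f :: "nat \<Rightarrow> 'x \<Rightarrow> 'a::{field,finite} fls" and m :: nat
  assumes "compact S" and "totally_disconnected S"
    and "orthonormal_basis absK S f"
    and "m > 0"
  shows "orthonormal_basis absK S (\<lambda>n x. f n x ^ (CARD('a) ^ m))
       \<and> orthonormal_basis (absKm m) S (\<lambda>n x. qroot m (f n x))"
proof
  show "orthonormal_basis absK S (\<lambda>n x. f n x ^ (CARD('a) ^ m))"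
    by (rule onb_frob[OF assms(1,3)])
  have "(\<lambda>n x. qroot m (f n x)) = f" by (simp add: qroot_id)
  moreover have "orthonormal_basis (absKm m) S f"
    by (rule onb_transfer[OF assms(1,3), of "CARD('a)^m"]) (simp_all add: absKm_root)
  ultimately show "orthonormal_basis (absKm m) S (\<lambda>n x. qroot m (f n x))" by simp
qed

end
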